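(* Let $Q$ be a quiver and let $C\subseteq \Bbbk Q$ be a monomial subcoalgebra. If $C$ is left f-qcF, then $C$ is left qcF.
   Context: $\Bbbk$ is a field. The path coalgebra $\Bbbk Q$ of a quiver $Q$ has as basis all paths of $Q$ (including the trivial paths, identified with the vertices), with $\Delta(p)=\sum_{xy=p}x\otimes y$ (where $xy$ is the concatenation of $x$ followed by $y$) and $\varepsilon(p)=1$ if $p$ is trivial, $0$ otherwise. A subcoalgebra $C\subseteq \Bbbk Q$ is monomial if it contains all vertices and arrows of $Q$ and has a linear basis consisting of paths. For a coalgebra $C$, the dual algebra $C^*$ has product $(fg)(x)=\sum f(x_1)g(x_2)$; a right $C$-comodule $M$ (coaction $m\mapsto\sum m_0\otimes m_1$) is a left $C^*$-module via $f\rightharpoonup m=\sum m_0f(m_1)$; in particular $C$ is a left $C^*$-module via $f\rightharpoonup x=\sum x_1 f(x_2)$. $C$ is left quasi-coFrobenius (left qcF) if $C$ embeds, as a left $C^*$-module, in a free left $C^*$-module. $C$ is left f-qcF if every finite dimensional right $C$-comodule embeds, as a left $C^*$-module, in a free left $C^*$-module. *)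

theory Defs
  imports Main
begin

(* A path is a pair (v, [a1,...,an]) : start vertex and
   list of arrows; the trivial path at v is (v, []). *)

type_synonym ('v,'e) path = "'v \<times> 'e list"

definition valid_path :: "('e \<Rightarrow> 'v) \<Rightarrow> ('e \<Rightarrow> 'v) \<Rightarrow> ('v,'e) path \<Rightarrow> bool" where
  "valid_path src tgt p \<longleftrightarrow>
     (case snd p of [] \<Rightarrow> True | a # _ \<Rightarrow> src a = fst p) \<and>
     (\<forall>i. Suc i < length (snd p) \<longrightarrow> tgt (snd p ! i) = src (snd p ! Suc i))"

definition path_end :: "('e \<Rightarrow> 'v) \<Rightarrow> ('v,'e) path \<Rightarrow> 'v" where
  "path_end tgt p = (if snd p = [] then fst p else tgt (last (snd p)))"

(* concatenation x y (x followed by y), meaningful when path_end x = start of y *)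
definition path_cat :: "('v,'e) path \<Rightarrow> ('v,'e) path \<Rightarrow> ('v,'e) path" where
  "path_cat x y = (fst x, snd x @ snd y)"

(* The path coalgebra kQ: finitely supported k-valued functions on the paths of Q
   (the function x corresponds to sum_p x(p) p). *)
definition path_coalg :: "('e \<Rightarrow> 'v) \<Rightarrow> ('e \<Rightarrow> 'v) \<Rightarrow> (('v,'e) path \<Rightarrow> 'k::field) set" where
  "path_coalg src tgt = {x. finite {p. x p \<noteq> 0} \<and> (\<forall>p. x p \<noteq> 0 \<longrightarrow> valid_path src tgt p)}"

definition path_vec :: "('v,'e) path \<Rightarrow> (('v,'e) path \<Rightarrow> 'k::field)" where
  "path_vec p = (\<lambda>q. if q = p then 1 else 0)"

(* Comultiplication, with kQ (x) kQ realised as finitely supported functions on pairs of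
   paths:  Delta(p) = sum_{xy = p} x (x) y. *)
definition comult :: "('e \<Rightarrow> 'v) \<Rightarrow> ('e \<Rightarrow> 'v) \<Rightarrow> (('v,'e) path \<Rightarrow> 'k::field)
     \<Rightarrow> (('v,'e) path \<times> ('v,'e) path \<Rightarrow> 'k)" where
  "comult src tgt x = (\<lambda>(a,b). if valid_path src tgt a \<and> valid_path src tgt b \<and> path_end tgt a = fst b
                               then x (path_cat a b) else 0)"

definition counit :: "(('v,'e) path \<Rightarrow> 'k::field) \<Rightarrow> 'k" where
  "counit x = (\<Sum>v\<in>{v. x (v, []) \<noteq> 0}. x (v, []))"

definition tens :: "('a \<Rightarrow> 'k::field) \<Rightarrow> ('b \<Rightarrow> 'k) \<Rightarrow> ('a \<times> 'b \<Rightarrow> 'k)" where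
  "tens u v = (\<lambda>(a,b). u a * v b)"

definition tens_sum :: "(('a \<Rightarrow> 'k::field) \<times> ('b \<Rightarrow> 'k)) list \<Rightarrow> ('a \<times> 'b \<Rightarrow> 'k)" where
  "tens_sum ps = (\<lambda>z. \<Sum>(u,v)\<leftarrow>ps. tens u v z)"

definition subspace_of :: "('a \<Rightarrow> 'k::field) set \<Rightarrow> ('a \<Rightarrow> 'k) set \<Rightarrow> bool" where
  "subspace_of C V \<longleftrightarrow> C \<subseteq> V \<and> (\<lambda>_. 0) \<in> C \<and>
     (\<forall>x\<in>C. \<forall>y\<in>C. (\<lambda>p. x p + y p) \<in> C) \<and> (\<forall>c. \<forall>x\<in>C. (\<lambda>p. c * x p) \<in> C)"

definition subcoalgebra :: "('e \<Rightarrow> 'v) \<Rightarrow> ('e \<Rightarrow> 'v) \<Rightarrow> (('v,'e) path \<Rightarrow> 'k::field) set \<Rightarrow> bool" where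
  "subcoalgebra src tgt C \<longleftrightarrow> subspace_of C (path_coalg src tgt) \<and>
     (\<forall>x\<in>C. \<exists>ps. set ps \<subseteq> C \<times> C \<and> comult src tgt x = tens_sum ps)"

(* monomial subcoalgebra: contains all vertices and arrows, and has a linear basis B
   consisting of paths, i.e. C is the linear span of B (= functions supported in B). *)
definition monomial_subcoalgebra :: "('e \<Rightarrow> 'v) \<Rightarrow> ('e \<Rightarrow> 'v) \<Rightarrow> (('v,'e) path \<Rightarrow> 'k::field) set \<Rightarrow> bool" where
  "monomial_subcoalgebra src tgt C \<longleftrightarrow> subcoalgebra src tgt C \<and>
     (\<forall>v. path_vec (v, []) \<in> C) \<and> (\<forall>a. path_vec (src a, [a]) \<in> C) \<and>
     (\<exists>B. B \<subseteq> {p. valid_path src tgt p} \<and>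
          C = {x \<in> path_coalg src tgt. \<forall>p. x p \<noteq> 0 \<longrightarrow> p \<in> B})"

(* The dual C^*: k-linear functionals on C (extended by 0 outside C). *)
definition dual :: "('a \<Rightarrow> 'k::field) set \<Rightarrow> (('a \<Rightarrow> 'k) \<Rightarrow> 'k) set" where
  "dual C = {f. (\<forall>x\<in>C. \<forall>y\<in>C. f (\<lambda>p. x p + y p) = f x + f y) \<and>
                (\<forall>c. \<forall>x\<in>C. f (\<lambda>p. c * x p) = c * f x) \<and>
                (\<forall>x. x \<notin> C \<longrightarrow> f x = 0)}"

(* product in C^*: (fg)(x) = sum f(x1) g(x2) (computed from any representation of Delta(x)
   in C (x) C; well defined for a subcoalgebra C) *)
definition conv :: "('e \<Rightarrow> 'v) \<Rightarrow> ('e \<Rightarrow> 'v) \<Rightarrow> (('v,'e) path \<Rightarrow> 'k::field) set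
     \<Rightarrow> ((('v,'e) path \<Rightarrow> 'k) \<Rightarrow> 'k) \<Rightarrow> ((('v,'e) path \<Rightarrow> 'k) \<Rightarrow> 'k) \<Rightarrow> ((('v,'e) path \<Rightarrow> 'k) \<Rightarrow> 'k)" where
  "conv src tgt C f g = (\<lambda>x. if x \<in> C then
      (SOME r. \<exists>ps. set ps \<subseteq> C \<times> C \<and> comult src tgt x = tens_sum ps \<and>
                    r = (\<Sum>(u,v)\<leftarrow>ps. f u * g v)) else 0)"

definition lact :: "('e \<Rightarrow> 'v) \<Rightarrow> ('e \<Rightarrow> 'v) \<Rightarrow> (('v,'e) path \<Rightarrow> 'k::field) set
     \<Rightarrow> ((('v,'e) path \<Rightarrow> 'k) \<Rightarrow> 'k) \<Rightarrow> (('v,'e) path \<Rightarrow> 'k) \<Rightarrow> (('v,'e) path \<Rightarrow> 'k)" where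
  "lact src tgt C f x = (if x \<in> C then
      (SOME y. \<exists>ps. set ps \<subseteq> C \<times> C \<and> comult src tgt x = tens_sum ps \<and>
                    y = (\<lambda>p. \<Sum>(u,v)\<leftarrow>ps. f v * u p)) else (\<lambda>_. 0))"

definition free_mod :: "('e \<Rightarrow> 'v) \<Rightarrow> ('e \<Rightarrow> 'v) \<Rightarrow> (('v,'e) path \<Rightarrow> 'k::field) set \<Rightarrow> 'i set
     \<Rightarrow> ('i \<Rightarrow> ((('v,'e) path \<Rightarrow> 'k) \<Rightarrow> 'k)) set" where
  "free_mod src tgt C I = {F. (\<forall>i. F i \<in> dual C) \<and> finite {i. F i \<noteq> (\<lambda>_. 0)} \<and>
                                (\<forall>i. i \<notin> I \<longrightarrow> F i = (\<lambda>_. 0))}"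

definition embeds_in_free :: "('e \<Rightarrow> 'v) \<Rightarrow> ('e \<Rightarrow> 'v) \<Rightarrow> (('v,'e) path \<Rightarrow> 'k::field) set
     \<Rightarrow> 'm set \<Rightarrow> ('m \<Rightarrow> 'm \<Rightarrow> 'm) \<Rightarrow> (((('v,'e) path \<Rightarrow> 'k) \<Rightarrow> 'k) \<Rightarrow> 'm \<Rightarrow> 'm) \<Rightarrow> 'i set \<Rightarrow> bool" where
  "embeds_in_free src tgt C M madd mact I \<longleftrightarrow>
     (\<exists>\<phi>. inj_on \<phi> M \<and> \<phi> ` M \<subseteq> free_mod src tgt C I \<and>
         (\<forall>x\<in>M. \<forall>y\<in>M. \<phi> (madd x y) = (\<lambda>i z. \<phi> x i z + \<phi> y i z)) \<and>
         (\<forall>f\<in>dual C. \<forall>x\<in>M. \<phi> (mact f x) = (\<lambda>i. conv src tgt C f (\<phi> x i))))"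

(* Finite dimensional right C-comodules, realised on k^n (functions nat => k vanishing
   from n on).  M (x) C is realised as functions T on nat \<times> paths with T(i,-) \<in> C and
   T(i,-) = 0 for i \<ge> n, i.e. T = sum_i e_i (x) T(i,-). *)
definition kn :: "nat \<Rightarrow> (nat \<Rightarrow> 'k::field) set" where
  "kn n = {m. \<forall>i\<ge>n. m i = 0}"

definition unitvec :: "nat \<Rightarrow> nat \<Rightarrow> 'k::field" where
  "unitvec i = (\<lambda>j. if j = i then 1 else 0)"

definition right_comodule :: "('e \<Rightarrow> 'v) \<Rightarrow> ('e \<Rightarrow> 'v) \<Rightarrow> (('v,'e) path \<Rightarrow> 'k::field) set \<Rightarrow> nat
     \<Rightarrow> ((nat \<Rightarrow> 'k) \<Rightarrow> (nat \<times> ('v,'e) path \<Rightarrow> 'k)) \<Rightarrow> bool" where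
  "right_comodule src tgt C n \<rho> \<longleftrightarrow>
     (\<forall>m\<in>kn n. (\<forall>i. (\<lambda>p. \<rho> m (i,p)) \<in> C) \<and> (\<forall>i\<ge>n. \<forall>p. \<rho> m (i,p) = 0)) \<and>
     (\<forall>m\<in>kn n. \<forall>m'\<in>kn n. \<rho> (\<lambda>j. m j + m' j) = (\<lambda>z. \<rho> m z + \<rho> m' z)) \<and>
     (\<forall>c. \<forall>m\<in>kn n. \<rho> (\<lambda>j. c * m j) = (\<lambda>z. c * \<rho> m z)) \<and>
     \<comment> \<open>coassociativity: (rho (x) id) rho = (id (x) Delta) rho\<close>
     (\<forall>m\<in>kn n. \<forall>l x y. (\<Sum>i<n. \<rho> (unitvec i) (l,x) * \<rho> m (i,y)) =
                         comult src tgt (\<lambda>p. \<rho> m (l,p)) (x,y)) \<and>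
     \<comment> \<open>counit: (id (x) epsilon) rho = id\<close>
     (\<forall>m\<in>kn n. \<forall>l. counit (\<lambda>p. \<rho> m (l,p)) = m l)"

definition comod_act :: "((nat \<Rightarrow> 'k::field) \<Rightarrow> (nat \<times> ('v,'e) path \<Rightarrow> 'k))
     \<Rightarrow> ((('v,'e) path \<Rightarrow> 'k) \<Rightarrow> 'k) \<Rightarrow> (nat \<Rightarrow> 'k) \<Rightarrow> (nat \<Rightarrow> 'k)" where
  "comod_act \<rho> f m = (\<lambda>l. f (\<lambda>p. \<rho> m (l,p)))"

(* left qcF: C embeds as left C^*-module in a free left C^*-module.  The index set is
   taken inside the type (path \<times> nat); this loses nothing. *)
definition left_qcF :: "('e \<Rightarrow> 'v) \<Rightarrow> ('e \<Rightarrow> 'v) \<Rightarrow> (('v,'e) path \<Rightarrow> 'k::field) set \<Rightarrow> bool" where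
  "left_qcF src tgt C \<longleftrightarrow>
     (\<exists>I :: (('v,'e) path \<times> nat) set.
        embeds_in_free src tgt C C (\<lambda>x y p. x p + y p) (lact src tgt C) I)"

definition left_fqcF :: "('e \<Rightarrow> 'v) \<Rightarrow> ('e \<Rightarrow> 'v) \<Rightarrow> (('v,'e) path \<Rightarrow> 'k::field) set \<Rightarrow> bool" where
  "left_fqcF src tgt C \<longleftrightarrow>
     (\<forall>n \<rho>. right_comodule src tgt C n \<rho> \<longrightarrow>
        (\<exists>I :: nat set. embeds_in_free src tgt C (kn n) (\<lambda>m m' j. m j + m' j) (comod_act \<rho>) I))"

end

theory Submission
  imports Defs
begin


lemma valid_Nil[simp]: "valid_path src tgt (v, [])"
  by (simp add: valid_path_def)

lemma valid_Cons[simp]: "valid_path src tgt (v, a # as) \<longleftrightarrow> src a = v \<and> valid_path src tgt (tgt a, as)"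
proof -
  have "(\<forall>i. Suc i < length (a # as) \<longrightarrow> tgt ((a#as) ! i) = src ((a#as) ! Suc i)) \<longleftrightarrow>
        (case as of [] \<Rightarrow> True | b # _ \<Rightarrow> src b = tgt a) \<and> (\<forall>i. Suc i < length as \<longrightarrow> tgt (as ! i) = src (as ! Suc i))"
  proof (cases as)
    case Nil then show ?thesis by simp
  next
    case (Cons b bs)
    show ?thesis unfolding Cons
    proof (intro iffI conjI allI impI)
      fix i assume H: "\<forall>i. Suc i < length (a # b # bs) \<longrightarrow> tgt ((a # b # bs) ! i) = src ((a # b # bs) ! Suc i)"
      from H[rule_format, of 0] show "case b # bs of [] \<Rightarrow> True | b # _ \<Rightarrow> src b = tgt a" by simp
      assume "Suc i < length (b # bs)"
      with H[rule_format, of "Suc i"] show "tgt ((b # bs) ! i) = src ((b # bs) ! Suc i)" by simp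
    next
      fix i assume H: "(case b # bs of [] \<Rightarrow> True | b # _ \<Rightarrow> src b = tgt a) \<and>
        (\<forall>i. Suc i < length (b # bs) \<longrightarrow> tgt ((b # bs) ! i) = src ((b # bs) ! Suc i))"
        and "Suc i < length (a # b # bs)"
      then show "tgt ((a # b # bs) ! i) = src ((a # b # bs) ! Suc i)"
        by (cases i) auto
    qed
  qed
  then show ?thesis unfolding valid_path_def by (simp only: snd_conv fst_conv list.case)
qed

lemma path_end_Nil[simp]: "path_end tgt (v, []) = v" by (simp add: path_end_def)
lemma path_end_Cons[simp]: "path_end tgt (v, a # as) = path_end tgt (tgt a, as)"
  by (cases as) (simp_all add: path_end_def)

lemma valid_append:
  "valid_path src tgt (v, xs @ ys) \<longleftrightarrow>
     valid_path src tgt (v, xs) \<and> valid_path src tgt (path_end tgt (v, xs), ys)"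
  by (induction xs arbitrary: v) auto

lemma path_end_append[simp]: "path_end tgt (v, xs @ ys) = path_end tgt (path_end tgt (v, xs), ys)"
  by (induction xs arbitrary: v) auto

definition cat_ok :: "('e \<Rightarrow> 'v) \<Rightarrow> ('e \<Rightarrow> 'v) \<Rightarrow> ('v,'e) path \<Rightarrow> ('v,'e) path \<Rightarrow> bool" where
  "cat_ok src tgt a b \<longleftrightarrow> valid_path src tgt a \<and> valid_path src tgt b \<and> path_end tgt a = fst b"

lemma comult_eq: "comult src tgt x (a,b) = (if cat_ok src tgt a b then x (path_cat a b) else 0)"
  by (simp add: comult_def cat_ok_def)

lemma cat_fst[simp]: "fst (path_cat a b) = fst a" by (simp add: path_cat_def)
lemma cat_snd[simp]: "snd (path_cat a b) = snd a @ snd b" by (simp add: path_cat_def)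

lemma cat_valid: "cat_ok src tgt a b \<Longrightarrow> valid_path src tgt (path_cat a b)"
  unfolding cat_ok_def path_cat_def by (cases a, cases b) (simp add: valid_append)

lemma cat_end: "cat_ok src tgt a b \<Longrightarrow> path_end tgt (path_cat a b) = path_end tgt b"
  unfolding cat_ok_def path_cat_def by (cases a, cases b) simp

lemma cat_okI: "valid_path src tgt (path_cat a b) \<Longrightarrow> path_end tgt a = fst b \<Longrightarrow> cat_ok src tgt a b"
  unfolding cat_ok_def path_cat_def by (cases a, cases b) (simp add: valid_append)

lemma cat_assoc: "path_cat (path_cat a b) c = path_cat a (path_cat b c)"
  by (simp add: path_cat_def)

lemma cat_ok_assoc1: "cat_ok src tgt a x \<Longrightarrow> cat_ok src tgt (path_cat a x) y \<Longrightarrow>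
   cat_ok src tgt x y \<and> cat_ok src tgt a (path_cat x y)"
  unfolding cat_ok_def path_cat_def by (cases a, cases x, cases y) (auto simp: valid_append)

lemma cat_ok_assoc2: "cat_ok src tgt a x \<Longrightarrow> cat_ok src tgt x y \<Longrightarrow>
   cat_ok src tgt (path_cat a x) y \<and> cat_ok src tgt a (path_cat x y)"
  unfolding cat_ok_def path_cat_def by (cases a, cases x, cases y) (auto simp: valid_append)

lemma cat_ok_assoc3: "cat_ok src tgt a (path_cat x y) \<Longrightarrow> cat_ok src tgt x y \<Longrightarrow>
   cat_ok src tgt a x \<and> cat_ok src tgt (path_cat a x) y"
  unfolding cat_ok_def path_cat_def by (cases a, cases x, cases y) (auto simp: valid_append)

lemma cat_split: "valid_path src tgt p \<Longrightarrow>
  cat_ok src tgt (fst p, take k (snd p)) (path_end tgt (fst p, take k (snd p)), drop k (snd p)) \<and>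
  path_cat (fst p, take k (snd p)) (path_end tgt (fst p, take k (snd p)), drop k (snd p)) = p"
  unfolding cat_ok_def path_cat_def
  by (cases p) (metis append_take_drop_id fst_conv snd_conv valid_append)

lemma cat_right_unique: "cat_ok src tgt a b \<Longrightarrow> cat_ok src tgt a b' \<Longrightarrow> path_cat a b = path_cat a b' \<Longrightarrow> b = b'"
  unfolding cat_ok_def path_cat_def by (cases b, cases b') auto

lemma cat_left_unique: "path_cat a b = path_cat a' b \<Longrightarrow> a = a'"
  unfolding path_cat_def by (cases a, cases a') auto

lemma cat_Nil_left: "cat_ok src tgt a p \<Longrightarrow> path_cat a p = p \<Longrightarrow> a = (fst p, [])"
  unfolding path_cat_def by (cases a, cases p) auto

lemma cat_Nil_right: "cat_ok src tgt a (v,[]) \<longleftrightarrow> valid_path src tgt a \<and> v = path_end tgt a"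
  unfolding cat_ok_def by auto

lemma path_cat_Nil_right[simp]: "path_cat a (v,[]) = a" by (simp add: path_cat_def)

lemma split_finite: "finite {(a,b). cat_ok src tgt a b \<and> path_cat a b = q}"
proof -
  let ?A = "{(a,b). cat_ok src tgt a b \<and> path_cat a b = q}"
  have "inj_on (\<lambda>(a,b). length (snd a)) ?A"
  proof (rule inj_onI)
    fix x y assume "x \<in> ?A" "y \<in> ?A" "(case x of (a,b) \<Rightarrow> length (snd a)) = (case y of (a,b) \<Rightarrow> length (snd a))"
    then obtain a b a' b' where xy: "x = (a,b)" "y = (a',b')" and H: "cat_ok src tgt a b" "path_cat a b = q" "cat_ok src tgt a' b'" "path_cat a' b' = q"
      "length (snd a) = length (snd a')" by (cases x, cases y) auto
    have "snd a @ snd b = snd a' @ snd b'" using H(2,4) by (metis cat_snd)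
    with H(5) have s: "snd a = snd a'" "snd b = snd b'" by auto
    have "fst a = fst a'" using H(2,4) by (metis cat_fst)
    with s have "a = a'" by (simp add: prod_eq_iff)
    moreover have "fst b = fst b'" using H(1,3) \<open>a = a'\<close> by (simp add: cat_ok_def)
    ultimately show "x = y" using s xy by (simp add: prod_eq_iff)
  qed
  moreover have "(\<lambda>(a,b). length (snd a)) ` ?A \<subseteq> {..length (snd q)}" by auto
  ultimately show ?thesis by (meson finite_atMost finite_subset inj_on_finite)
qed




lemma sum_list_nonzero: "(\<Sum>x\<leftarrow>xs. f x) \<noteq> (0::'a::comm_monoid_add) \<Longrightarrow> \<exists>x\<in>set xs. f x \<noteq> 0"
  by (induction xs) auto

lemma sum_list_sum_swap: "(\<Sum>z\<leftarrow>ps. \<Sum>a\<in>S. h z a) = (\<Sum>a\<in>S. \<Sum>z\<leftarrow>ps. (h z a :: 'a::comm_monoid_add))"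
  by (induction ps) (auto simp: sum.distrib)

locale monoC =
  fixes src tgt :: "'e \<Rightarrow> 'v" and B :: "('v,'e) path set" and C :: "(('v,'e) path \<Rightarrow> 'k::field) set"
  assumes B_valid: "\<And>p. p \<in> B \<Longrightarrow> valid_path src tgt p"
    and C_eq: "C = {x \<in> path_coalg src tgt. \<forall>p. x p \<noteq> 0 \<longrightarrow> p \<in> B}"
    and subco: "subcoalgebra src tgt C"
    and verts: "\<And>v. path_vec (v,[]) \<in> C"
begin

lemma memC: "x \<in> C \<longleftrightarrow> finite {p. x p \<noteq> 0} \<and> (\<forall>p. x p \<noteq> 0 \<longrightarrow> p \<in> B)"
  using B_valid unfolding C_eq path_coalg_def by auto

lemma zero_C[simp]: "(\<lambda>_. 0) \<in> C" by (simp add: memC)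

lemma add_C: "x \<in> C \<Longrightarrow> y \<in> C \<Longrightarrow> (\<lambda>p. x p + y p) \<in> C"
proof -
  assume "x \<in> C" "y \<in> C"
  then have "finite ({p. x p \<noteq> 0} \<union> {p. y p \<noteq> 0})" by (simp add: memC)
  moreover have "{p. x p + y p \<noteq> 0} \<subseteq> {p. x p \<noteq> 0} \<union> {p. y p \<noteq> 0}" by auto
  ultimately show ?thesis using \<open>x \<in> C\<close> \<open>y \<in> C\<close> unfolding memC
    by (metis (mono_tags, lifting) add.right_neutral add_0 finite_subset)
qed

lemma smult_C: "x \<in> C \<Longrightarrow> (\<lambda>p. c * x p) \<in> C"
proof -
  assume "x \<in> C"
  moreover have "{p. c * x p \<noteq> 0} \<subseteq> {p. x p \<noteq> 0}" by auto
  ultimately show ?thesis unfolding memC by (metis (mono_tags, lifting) finite_subset mult_zero_right)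
qed

lemma delta_C: "p \<in> B \<Longrightarrow> path_vec p \<in> C"
proof -
  assume "p \<in> B"
  have "{q. path_vec p q \<noteq> (0::'k)} = {p}" by (auto simp: path_vec_def)
  then show ?thesis using \<open>p \<in> B\<close> unfolding memC by (auto simp: path_vec_def split: if_splits)
qed

lemma B_vert: "(v,[]) \<in> B"
  using verts[of v] unfolding memC by (metis path_vec_def one_neq_zero)

lemma B_split: assumes "cat_ok src tgt a b" "path_cat a b \<in> B" shows "a \<in> B" "b \<in> B"
proof -
  have x: "path_vec (path_cat a b) \<in> C" using assms(2) by (rule delta_C)
  then obtain ps where ps: "set ps \<subseteq> C \<times> C" "comult src tgt (path_vec (path_cat a b)) = tens_sum ps"
    using subco unfolding subcoalgebra_def by blast
  have "comult src tgt (path_vec (path_cat a b)) (a,b) = (1::'k)"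
    using assms(1) by (simp add: comult_eq path_vec_def)
  then have "(\<Sum>(u,v)\<leftarrow>ps. tens u v (a,b)) \<noteq> (0::'k)" using ps(2) by (simp add: tens_sum_def)
  then obtain u v where uv: "(u,v) \<in> set ps" "u a * v b \<noteq> 0"
    using sum_list_nonzero[of "\<lambda>(u,v). tens u v (a,b)" ps] by (auto simp: tens_def)
  then have "u \<in> C" "v \<in> C" using ps(1) by auto
  then show "a \<in> B" "b \<in> B" using uv(2) unfolding memC by (metis mult_zero_left, metis mult_zero_right)
qed

lemma dual_zero: "f \<in> dual C \<Longrightarrow> f (\<lambda>_. 0) = 0"
proof -
  assume f: "f \<in> dual C"
  have "\<forall>c. \<forall>x\<in>C. f (\<lambda>p. c * x p) = c * f x" using f unfolding dual_def by blast
  from bspec[OF spec[OF this, of 0] zero_C] show ?thesis by simp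
qed

definition lc :: "('v,'e) path set \<Rightarrow> (('v,'e) path \<Rightarrow> 'k) \<Rightarrow> (('v,'e) path \<Rightarrow> 'k)" where
  "lc S c = (\<lambda>q. \<Sum>a\<in>S. c a * path_vec a q)"

lemma lc_prop: assumes "finite S" "\<forall>a\<in>S. c a \<noteq> 0 \<longrightarrow> a \<in> B" "f \<in> dual C"
  shows "lc S c \<in> C \<and> f (lc S c) = (\<Sum>a\<in>S. c a * f (path_vec a))"
  using assms(1,2)
proof (induction S rule: finite_induct)
  case empty then show ?case using dual_zero[OF assms(3)] by (simp add: lc_def)
next
  case (insert a S)
  have IH: "lc S c \<in> C" "f (lc S c) = (\<Sum>a\<in>S. c a * f (path_vec a))" using insert by auto
  have eq: "lc (insert a S) c = (\<lambda>q. (\<lambda>q. c a * path_vec a q) q + lc S c q)"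
    using insert(1,2) by (simp add: lc_def)
  have t: "(\<lambda>q. c a * path_vec a q) \<in> C \<and> f (\<lambda>q. c a * path_vec a q) = c a * f (path_vec a)"
  proof (cases "c a = 0")
    case True then show ?thesis using dual_zero[OF assms(3)] by simp
  next
    case False then have "a \<in> B" using insert by auto
    then show ?thesis using delta_C smult_C assms(3) unfolding dual_def by blast
  qed
  have "lc (insert a S) c \<in> C" unfolding eq using t IH add_C by blast
  moreover have "f (lc (insert a S) c) = c a * f (path_vec a) + f (lc S c)"
    unfolding eq using t IH assms(3) unfolding dual_def by auto
  ultimately show ?case using IH insert(1,2) by simp
qed

lemma expand: assumes "f \<in> dual C" "u \<in> C" "finite S" "{p. u p \<noteq> 0} \<subseteq> S"
  shows "f u = (\<Sum>a\<in>S. u a * f (path_vec a))"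
proof -
  have "lc S u = u"
  proof
    fix q
    have "lc S u q = (\<Sum>a\<in>S. if q = a then u a else 0)" unfolding lc_def path_vec_def
      by (rule sum.cong) auto
    also have "\<dots> = (if q \<in> S then u q else 0)" using assms(3) by (simp add: sum.delta)
    also have "\<dots> = u q" using assms(4) by auto
    finally show "lc S u q = u q" .
  qed
  moreover have "\<forall>a\<in>S. u a \<noteq> 0 \<longrightarrow> a \<in> B" using assms(2) unfolding memC by auto
  ultimately show ?thesis using lc_prop[OF assms(3) _ assms(1), of u] by simp
qed

lemma dual_ext: assumes "f \<in> dual C" "\<And>p. p \<in> B \<Longrightarrow> f (path_vec p) = 0" shows "f = (\<lambda>_. 0)"
proof
  fix x show "f x = 0"
  proof (cases "x \<in> C")
    case True
    then have "f x = (\<Sum>a\<in>{p. x p \<noteq> 0}. x a * f (path_vec a))"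
      using expand[OF assms(1) True] unfolding memC by blast
    also have "\<dots> = 0" using True assms(2) unfolding memC by (intro sum.neutral) auto
    finally show ?thesis .
  next
    case False then show ?thesis using assms(1) unfolding dual_def by auto
  qed
qed

end



context monoC begin

definition Spl :: "(('v,'e) path \<Rightarrow> 'k) \<Rightarrow> (('v,'e) path \<times> ('v,'e) path) set" where
  "Spl x = {z. comult src tgt x z \<noteq> 0}"

lemma Spl_finite: assumes "x \<in> C" shows "finite (Spl x)"
proof -
  have "Spl x \<subseteq> (\<Union>q\<in>{p. x p \<noteq> 0}. {(a,b). cat_ok src tgt a b \<and> path_cat a b = q})"
    unfolding Spl_def by (auto simp: comult_eq split: if_splits)
  moreover have "finite (\<Union>q\<in>{p. x p \<noteq> 0}. {(a,b). cat_ok src tgt a b \<and> path_cat a b = q})"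
    using assms split_finite unfolding memC by blast
  ultimately show ?thesis by (rule finite_subset)
qed

lemma Spl_B: assumes "x \<in> C" "z \<in> Spl x" shows "fst z \<in> B" "snd z \<in> B" "cat_ok src tgt (fst z) (snd z)"
proof -
  obtain a b where z: "z = (a,b)" by (cases z)
  have c: "cat_ok src tgt a b" "x (path_cat a b) \<noteq> 0" using assms(2) unfolding z Spl_def
    by (auto simp: comult_eq split: if_splits)
  then have "path_cat a b \<in> B" using assms(1) unfolding memC by blast
  then show "fst z \<in> B" "snd z \<in> B" "cat_ok src tgt (fst z) (snd z)" using B_split c z by auto
qed

lemma list_sum_cong: "(\<And>z. z \<in> set ps \<Longrightarrow> h z = k z) \<Longrightarrow> (\<Sum>z\<leftarrow>ps. h z) = (\<Sum>z\<leftarrow>ps. k z)"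
  by (metis map_cong)

lemma bilin:
  assumes x: "x \<in> C" and ps: "set ps \<subseteq> C \<times> C" "comult src tgt x = tens_sum ps"
    and f: "f \<in> dual C" and g: "g \<in> dual C"
  shows "(\<Sum>(u,v)\<leftarrow>ps. f u * g v) =
     (\<Sum>z\<in>Spl x. comult src tgt x z * f (path_vec (fst z)) * g (path_vec (snd z)))"
proof -
  define S where "S = (\<Union>z\<in>set ps. {p. fst z p \<noteq> 0} \<union> {p. snd z p \<noteq> 0})"
  have S: "finite S" unfolding S_def
  proof (rule finite_UN_I)
    show "finite (set ps)" by simp
    fix z assume "z \<in> set ps"
    then have "fst z \<in> C" "snd z \<in> C" using ps(1) by auto
    then show "finite ({p. fst z p \<noteq> 0} \<union> {p. snd z p \<noteq> 0})" unfolding memC by blast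
  qed
  define F where "F a = f (path_vec a)" for a
  define G where "G a = g (path_vec a)" for a
  have "(\<Sum>(u,v)\<leftarrow>ps. f u * g v) = (\<Sum>z\<leftarrow>ps. \<Sum>a\<in>S. \<Sum>b\<in>S. fst z a * snd z b * (F a * G b))"
  proof (rule list_sum_cong)
    fix z assume z: "z \<in> set ps"
    obtain u v where uv: "z = (u,v)" by (cases z)
    have "u \<in> C" "v \<in> C" using z ps(1) uv by auto
    have "f u = (\<Sum>a\<in>S. u a * F a)" unfolding F_def
      by (rule expand[OF f \<open>u \<in> C\<close> S]) (use z uv in \<open>auto simp: S_def\<close>)
    moreover have "g v = (\<Sum>b\<in>S. v b * G b)" unfolding G_def
      by (rule expand[OF g \<open>v \<in> C\<close> S]) (use z uv in \<open>auto simp: S_def\<close>)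
    ultimately show "(case z of (u,v) \<Rightarrow> f u * g v) = (\<Sum>a\<in>S. \<Sum>b\<in>S. fst z a * snd z b * (F a * G b))"
      unfolding uv by (simp add: sum_product mult_ac)
  qed
  also have "\<dots> = (\<Sum>a\<in>S. \<Sum>z\<leftarrow>ps. \<Sum>b\<in>S. fst z a * snd z b * (F a * G b))"
    by (rule sum_list_sum_swap)
  also have "\<dots> = (\<Sum>a\<in>S. \<Sum>b\<in>S. \<Sum>z\<leftarrow>ps. fst z a * snd z b * (F a * G b))"
    by (intro sum.cong refl sum_list_sum_swap)
  also have "\<dots> = (\<Sum>a\<in>S. \<Sum>b\<in>S. comult src tgt x (a,b) * F a * G b)"
  proof (intro sum.cong refl)
    fix a b
    have "(\<Sum>z\<leftarrow>ps. fst z a * snd z b * (F a * G b)) = (\<Sum>(u,v)\<leftarrow>ps. tens u v (a,b)) * (F a * G b)"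
      by (simp add: tens_def sum_list_mult_const[symmetric] case_prod_beta)
    then show "(\<Sum>z\<leftarrow>ps. fst z a * snd z b * (F a * G b)) = comult src tgt x (a,b) * F a * G b"
      using ps(2) by (simp add: tens_sum_def mult.assoc)
  qed
  also have "\<dots> = (\<Sum>z\<in>S\<times>S. comult src tgt x z * F (fst z) * G (snd z))"
    by (simp add: sum.cartesian_product case_prod_beta)
  also have "\<dots> = (\<Sum>z\<in>Spl x. comult src tgt x z * F (fst z) * G (snd z))"
  proof (rule sum.mono_neutral_right)
    show "finite (S \<times> S)" using S by simp
    show "Spl x \<subseteq> S \<times> S"
    proof
      fix z assume "z \<in> Spl x"
      then have "tens_sum ps z \<noteq> 0" using ps(2) by (simp add: Spl_def)
      then obtain u v where "(u,v) \<in> set ps" "tens u v z \<noteq> 0"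
        unfolding tens_sum_def using sum_list_nonzero[of "\<lambda>(u,v). tens u v z" ps] by auto
      then show "z \<in> S \<times> S" unfolding S_def tens_def by (cases z) force
    qed
    show "\<forall>z\<in>S \<times> S - Spl x. comult src tgt x z * F (fst z) * G (snd z) = 0"
      by (simp add: Spl_def)
  qed
  finally show ?thesis by (simp add: F_def G_def)
qed

lemma exists_rep: "x \<in> C \<Longrightarrow> \<exists>ps. set ps \<subseteq> C \<times> C \<and> comult src tgt x = tens_sum ps"
  using subco unfolding subcoalgebra_def by blast

lemma conv_eq: assumes "x \<in> C" "f \<in> dual C" "g \<in> dual C"
  shows "conv src tgt C f g x = (\<Sum>z\<in>Spl x. comult src tgt x z * f (path_vec (fst z)) * g (path_vec (snd z)))"
proof -
  obtain ps where ps: "set ps \<subseteq> C \<times> C" "comult src tgt x = tens_sum ps" using exists_rep assms(1) by blast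
  show ?thesis unfolding conv_def using assms(1)
    apply simp
    apply (rule someI2[where a = "\<Sum>(u,v)\<leftarrow>ps. f u * g v"])
    using ps apply blast
    using bilin assms by blast
qed

definition ev :: "('v,'e) path \<Rightarrow> (('v,'e) path \<Rightarrow> 'k) \<Rightarrow> 'k" where
  "ev q = (\<lambda>y. if y \<in> C then y q else 0)"

lemma ev_dual: "ev q \<in> dual C"
  unfolding dual_def ev_def using add_C smult_C by auto

lemma ev_delta: "a \<in> B \<Longrightarrow> ev q (path_vec a) = (if a = q then 1 else 0)"
  using delta_C by (auto simp: ev_def path_vec_def)

lemma lact_eq: assumes "x \<in> C" "f \<in> dual C"
  shows "lact src tgt C f x = (\<lambda>q. \<Sum>z\<in>Spl x. comult src tgt x z * ev q (path_vec (fst z)) * f (path_vec (snd z)))"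
proof -
  obtain ps0 where ps0: "set ps0 \<subseteq> C \<times> C" "comult src tgt x = tens_sum ps0" using exists_rep assms(1) by blast
  have key: "(\<lambda>p. \<Sum>(u,v)\<leftarrow>ps. f v * u p) = (\<lambda>q. \<Sum>z\<in>Spl x. comult src tgt x z * ev q (path_vec (fst z)) * f (path_vec (snd z)))"
    if ps: "set ps \<subseteq> C \<times> C" "comult src tgt x = tens_sum ps" for ps
  proof
    fix q
    have "(\<Sum>(u,v)\<leftarrow>ps. f v * u q) = (\<Sum>(u,v)\<leftarrow>ps. ev q u * f v)"
      by (rule list_sum_cong) (use ps(1) in \<open>auto simp: ev_def\<close>)
    also have "\<dots> = (\<Sum>z\<in>Spl x. comult src tgt x z * ev q (path_vec (fst z)) * f (path_vec (snd z)))"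
      by (rule bilin[OF assms(1) ps ev_dual assms(2)])
    finally show "(\<Sum>(u,v)\<leftarrow>ps. f v * u q) = \<dots>" .
  qed
  show ?thesis unfolding lact_def using assms(1)
    apply simp
    apply (rule someI2[where a = "\<lambda>p. \<Sum>(u,v)\<leftarrow>ps0. f v * u p"])
    using ps0 apply blast
    using key by blast
qed

end



definition indr :: "('e \<Rightarrow> 'v) \<Rightarrow> ('e \<Rightarrow> 'v) \<Rightarrow> (nat \<Rightarrow> ('v,'e) path) \<Rightarrow> nat \<Rightarrow> ('v,'e) path \<Rightarrow> nat \<Rightarrow> bool" where
  "indr src tgt e i p j \<longleftrightarrow> cat_ok src tgt (e i) p \<and> path_cat (e i) p = e j"

definition rho :: "('e \<Rightarrow> 'v) \<Rightarrow> ('e \<Rightarrow> 'v) \<Rightarrow> (nat \<Rightarrow> ('v,'e) path) \<Rightarrow> nat \<Rightarrow> (nat \<Rightarrow> 'k::field) \<Rightarrow> (nat \<times> ('v,'e) path \<Rightarrow> 'k)" where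
  "rho src tgt e n m = (\<lambda>(i,p). if i < n then (\<Sum>j<n. m j * (if indr src tgt e i p j then 1 else 0)) else 0)"

lemma sum_single: "finite S \<Longrightarrow> a \<in> S \<Longrightarrow> (\<And>k. k \<in> S \<Longrightarrow> k \<noteq> a \<Longrightarrow> g k = 0) \<Longrightarrow> sum g S = g a"
  by (simp add: sum.remove sum.neutral)

locale finN = monoC src tgt B C for src tgt :: "'e \<Rightarrow> 'v" and B and C :: "(('v,'e) path \<Rightarrow> 'k::field) set" +
  fixes N :: "('v,'e) path set" and e :: "nat \<Rightarrow> ('v,'e) path" and n :: nat
  assumes N_sub: "N \<subseteq> B"
    and bij: "bij_betw e {..<n} N"
    and pref: "\<And>a b. cat_ok src tgt a b \<Longrightarrow> path_cat a b \<in> N \<Longrightarrow> a \<in> N"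
begin

abbreviation "ind \<equiv> indr src tgt e"
abbreviation "\<rho> \<equiv> rho src tgt e n"

lemma e_inj: "i < n \<Longrightarrow> j < n \<Longrightarrow> e i = e j \<Longrightarrow> i = j"
  using bij unfolding bij_betw_def inj_on_def by auto

lemma e_N: "i < n \<Longrightarrow> e i \<in> N" using bij unfolding bij_betw_def by auto
lemma e_B: "i < n \<Longrightarrow> e i \<in> B" using e_N N_sub by auto
lemma N_e: "p \<in> N \<Longrightarrow> \<exists>i<n. e i = p" using bij unfolding bij_betw_def by auto

lemma ind_unique: "j < n \<Longrightarrow> j' < n \<Longrightarrow> ind i p j \<Longrightarrow> ind i p j' \<Longrightarrow> j = j'"
  unfolding indr_def using e_inj by auto

lemma rho_val1: assumes "i < n" "j0 < n" "ind i p j0" shows "\<rho> m (i,p) = m j0"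
proof -
  have "(\<Sum>j<n. m j * (if ind i p j then 1 else 0)) = m j0 * (if ind i p j0 then 1 else 0)"
  proof (rule sum_single)
    fix k assume "k \<in> {..<n}" "k \<noteq> j0"
    then have "\<not> ind i p k" using assms ind_unique[of k j0 i p] by auto
    then show "m k * (if ind i p k then 1 else 0) = 0" by simp
  qed (use assms in auto)
  then show ?thesis using assms by (simp add: rho_def)
qed

lemma rho_val0: assumes "\<not> (\<exists>j<n. ind i p j)" shows "\<rho> m (i,p) = 0"
  using assms by (simp add: rho_def)

lemma rho_C: "(\<lambda>p. \<rho> m (i,p)) \<in> C"
proof -
  have sub: "{p. \<rho> m (i,p) \<noteq> 0} \<subseteq> (\<Union>j<n. snd ` {(a,b). cat_ok src tgt a b \<and> path_cat a b = e j})"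
  proof
    fix p assume "p \<in> {p. \<rho> m (i,p) \<noteq> 0}"
    then have "\<exists>j<n. ind i p j" using rho_val0[of i p m] by auto
    then obtain j where "j < n" "ind i p j" by blast
    then have "(e i, p) \<in> {(a,b). cat_ok src tgt a b \<and> path_cat a b = e j}" unfolding indr_def by simp
    then have "snd (e i, p) \<in> snd ` {(a,b). cat_ok src tgt a b \<and> path_cat a b = e j}" by (rule imageI)
    then have "p \<in> snd ` {(a,b). cat_ok src tgt a b \<and> path_cat a b = e j}" by simp
    then show "p \<in> (\<Union>j<n. snd ` {(a,b). cat_ok src tgt a b \<and> path_cat a b = e j})"
      using \<open>j < n\<close> by blast
  qed
  have "finite (\<Union>j<n. snd ` {(a,b). cat_ok src tgt a b \<and> path_cat a b = e j})"
    by (intro finite_UN_I finite_imageI split_finite) simp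
  moreover have "\<forall>p. \<rho> m (i,p) \<noteq> 0 \<longrightarrow> p \<in> B"
  proof (intro allI impI)
    fix p assume "\<rho> m (i,p) \<noteq> 0"
    then have "\<exists>j<n. ind i p j" using rho_val0[of i p m] by auto
    then obtain j where "j < n" "ind i p j" by blast
    then show "p \<in> B" using B_split(2)[of "e i" p] e_B[of j] by (simp add: indr_def)
  qed
  ultimately show ?thesis using finite_subset[OF sub] unfolding memC by blast
qed

lemma rho_unit: assumes "l < n" "i < n" shows "\<rho> (unitvec i) (l,x) = (if ind l x i then 1 else (0::'k))"
proof (cases "\<exists>j<n. ind l x j")
  case True
  then obtain j where j: "j < n" "ind l x j" by blast
  have "\<rho> (unitvec i) (l,x) = unitvec i j" by (rule rho_val1[OF assms(1) j])
  moreover have "ind l x i \<longleftrightarrow> i = j" using ind_unique[of i j l x] assms j by blast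
  ultimately show ?thesis unfolding unitvec_def by (cases "i = j") simp_all
next
  case False
  then have "\<rho> (unitvec i) (l,x) = 0" by (intro rho_val0) 
  then show ?thesis using False assms by auto
qed

lemma comodule: "right_comodule src tgt C n \<rho>"
  unfolding right_comodule_def
proof (intro conjI ballI allI impI)
  fix m :: "nat \<Rightarrow> 'k" and i
  show "(\<lambda>p. \<rho> m (i,p)) \<in> C" by (rule rho_C)
next
  fix m :: "nat \<Rightarrow> 'k" and i p assume "n \<le> i"
  then show "\<rho> m (i,p) = 0" by (simp add: rho_def)
next
  fix m m' :: "nat \<Rightarrow> 'k"
  show "\<rho> (\<lambda>j. m j + m' j) = (\<lambda>z. \<rho> m z + \<rho> m' z)"
    by (auto simp: rho_def sum.distrib ring_distribs)
next
  fix m :: "nat \<Rightarrow> 'k" and c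
  show "\<rho> (\<lambda>j. c * m j) = (\<lambda>z. c * \<rho> m z)"
    by (auto simp: rho_def sum_distrib_left mult.assoc)
next
  fix m :: "nat \<Rightarrow> 'k" and l assume m: "m \<in> kn n"
  show "counit (\<lambda>p. \<rho> m (l,p)) = m l"
  proof (cases "l < n")
    case False
    then have "m l = 0" using m by (simp add: kn_def)
    then show ?thesis using False by (simp add: counit_def rho_def)
  next
    case True
    have v: "\<rho> m (l,(v,[])) = (if v = path_end tgt (e l) then m l else 0)" for v
    proof (cases "v = path_end tgt (e l)")
      case True
      have "ind l (v,[]) l" unfolding indr_def using True e_B[OF \<open>l < n\<close>] B_valid
        by (simp add: cat_Nil_right)
      then show ?thesis using rho_val1[OF \<open>l<n\<close> \<open>l<n\<close>] True by simp
    next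
      case False
      then have "\<not> ind l (v,[]) j" for j unfolding indr_def by (simp add: cat_Nil_right)
      then have "\<rho> m (l,(v,[])) = 0" by (intro rho_val0) blast
      then show ?thesis using False by simp
    qed
    show ?thesis
    proof (cases "m l = 0")
      case True then show ?thesis unfolding counit_def v by simp
    next
      case False
      then have "{v. (if v = path_end tgt (e l) then m l else 0) \<noteq> 0} = {path_end tgt (e l)}" by auto
      then show ?thesis unfolding counit_def v by simp
    qed
  qed
next
  fix m :: "nat \<Rightarrow> 'k" and l x y assume m: "m \<in> kn n"
  show "(\<Sum>i<n. \<rho> (unitvec i) (l,x) * \<rho> m (i,y)) = comult src tgt (\<lambda>p. \<rho> m (l,p)) (x,y)"
  proof (cases "l < n")
    case False
    then show ?thesis by (simp add: rho_def comult_eq)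
  next
    case l: True
    show ?thesis
    proof (cases "\<exists>i0<n. ind l x i0")
      case True
      then obtain i0 where i0: "i0 < n" "ind l x i0" by blast
      have "(\<Sum>i<n. \<rho> (unitvec i) (l,x) * \<rho> m (i,y)) = \<rho> (unitvec i0) (l,x) * \<rho> m (i0,y)"
      proof (rule sum_single)
        fix k assume "k \<in> {..<n}" "k \<noteq> i0"
        then have "\<not> ind l x k" using i0 ind_unique[of k i0 l x] by auto
        then show "\<rho> (unitvec k) (l,x) * \<rho> m (k,y) = 0" using rho_unit[of l k x] \<open>k \<in> {..<n}\<close> l by simp
      qed (use i0 in auto)
      also have "\<dots> = \<rho> m (i0,y)" using rho_unit[OF l i0(1)] i0 by simp
      also have "\<dots> = comult src tgt (\<lambda>p. \<rho> m (l,p)) (x,y)"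
      proof (cases "\<exists>j<n. ind i0 y j")
        case True
        then obtain j where j: "j < n" "ind i0 y j" by blast
        have c1: "cat_ok src tgt (e l) x" "path_cat (e l) x = e i0" using i0 by (auto simp: indr_def)
        have c2: "cat_ok src tgt (e i0) y" "path_cat (e i0) y = e j" using j by (auto simp: indr_def)
        have "cat_ok src tgt x y \<and> cat_ok src tgt (e l) (path_cat x y)"
          using cat_ok_assoc1[of src tgt "e l" x y] c1 c2 by simp
        moreover have "path_cat (e l) (path_cat x y) = e j" using c1 c2 by (simp add: cat_assoc[symmetric])
        ultimately have "ind l (path_cat x y) j" "cat_ok src tgt x y" by (auto simp: indr_def)
        then have "\<rho> m (l, path_cat x y) = m j" "\<rho> m (i0, y) = m j"
          using rho_val1[OF i0(1) j(1) j(2), of m] rho_val1[OF l j(1), of "path_cat x y" m] by auto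
        then show ?thesis using \<open>cat_ok src tgt x y\<close> by (simp add: comult_eq)
      next
        case False
        have "\<rho> m (l, path_cat x y) = 0" if cxy: "cat_ok src tgt x y"
        proof (rule rho_val0, rule notI)
          assume "\<exists>j<n. ind l (path_cat x y) j"
          then obtain j where j: "j < n" "ind l (path_cat x y) j" by blast
          have c1: "cat_ok src tgt (e l) x" "path_cat (e l) x = e i0" using i0 by (auto simp: indr_def)
          have "cat_ok src tgt (e l) (path_cat x y)" "path_cat (e l) (path_cat x y) = e j" using j by (auto simp: indr_def)
          then have "cat_ok src tgt (path_cat (e l) x) y" "path_cat (path_cat (e l) x) y = e j"
            using cat_ok_assoc3[of src tgt "e l" x y] cxy by (simp_all add: cat_assoc)
          then have "ind i0 y j" using c1 by (simp add: indr_def)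
          then show False using False j by auto
        qed
        then show ?thesis using rho_val0 False by (simp add: comult_eq)
      qed
      finally show ?thesis .
    next
      case False
      have "(\<Sum>i<n. \<rho> (unitvec i) (l,x) * \<rho> m (i,y)) = 0"
        by (rule sum.neutral) (use False rho_unit l in auto)
      moreover have "\<rho> m (l, path_cat x y) = 0" if cxy: "cat_ok src tgt x y"
      proof (rule rho_val0, rule notI)
        assume "\<exists>j<n. ind l (path_cat x y) j"
        then obtain j where j: "j < n" "ind l (path_cat x y) j" by blast
        have "cat_ok src tgt (e l) (path_cat x y)" "path_cat (e l) (path_cat x y) = e j" using j by (auto simp: indr_def)
        then have c: "cat_ok src tgt (e l) x" "cat_ok src tgt (path_cat (e l) x) y" "path_cat (path_cat (e l) x) y = e j"
          using cat_ok_assoc3[of src tgt "e l" x y] cxy by (simp_all add: cat_assoc)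
        then have "path_cat (e l) x \<in> N" using pref e_N[OF j(1)] by metis
        then obtain i where "i < n" "e i = path_cat (e l) x" using N_e by blast
        then have "ind l x i" using c by (simp add: indr_def)
        then show False using False \<open>i < n\<close> by auto
      qed
      ultimately show ?thesis by (simp add: comult_eq)
    qed
  qed
qed

end



context finN begin

lemma unitvec_kn: "i < n \<Longrightarrow> unitvec i \<in> kn n" by (simp add: kn_def unitvec_def)
lemma zero_kn: "(\<lambda>_. 0) \<in> kn n" by (simp add: kn_def)

lemma act_ev_unit: assumes "i < n"
  shows "comod_act \<rho> (ev t) (unitvec i) = (\<lambda>l. if l < n \<and> ind l t i then 1 else (0::'k))"
proof
  fix l
  have "comod_act \<rho> (ev t) (unitvec i) l = \<rho> (unitvec i) (l,t)"
    unfolding comod_act_def ev_def using rho_C by simp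
  also have "\<dots> = (if l < n \<and> ind l t i then 1 else 0)"
    using rho_unit[OF _ assms, of l t] by (cases "l < n") (auto simp: rho_def)
  finally show "comod_act \<rho> (ev t) (unitvec i) l = (if l < n \<and> ind l t i then 1 else 0)" .
qed

lemma conv_single: assumes "y \<in> B" "f \<in> dual C" "g \<in> dual C"
  and "conv src tgt C f g (path_vec y) \<noteq> 0"
  shows "\<exists>a b. cat_ok src tgt a b \<and> path_cat a b = y \<and> f (path_vec a) \<noteq> 0 \<and> g (path_vec b) \<noteq> 0"
proof -
  have "(\<Sum>z\<in>Spl (path_vec y). comult src tgt (path_vec y) z * f (path_vec (fst z)) * g (path_vec (snd z))) \<noteq> 0"
    using assms conv_eq[OF delta_C[OF assms(1)] assms(2,3)] by simp
  then obtain z where z: "comult src tgt (path_vec y) z * f (path_vec (fst z)) * g (path_vec (snd z)) \<noteq> 0"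
    by (meson sum.not_neutral_contains_not_neutral)
  obtain a b where ab: "z = (a,b)" by (cases z)
  from z ab have "cat_ok src tgt a b" "path_cat a b = y"
    by (auto simp: comult_eq path_vec_def split: if_splits)
  moreover have "f (path_vec a) \<noteq> 0" "g (path_vec b) \<noteq> 0" using z ab by auto
  ultimately show ?thesis by blast
qed

lemma conv_at_cat: assumes "cat_ok src tgt t y" "path_cat t y \<in> B" "g \<in> dual C"
  shows "conv src tgt C (ev t) g (path_vec (path_cat t y)) = g (path_vec y)"
proof -
  let ?x = "path_vec (path_cat t y) :: ('v,'e) path \<Rightarrow> 'k"
  have xC: "?x \<in> C" using delta_C assms(2) by blast
  have tB: "t \<in> B" "y \<in> B" using B_split assms(1,2) by auto
  have "conv src tgt C (ev t) g ?x = (\<Sum>z\<in>Spl ?x. comult src tgt ?x z * ev t (path_vec (fst z)) * g (path_vec (snd z)))"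
    by (rule conv_eq[OF xC ev_dual assms(3)])
  also have "\<dots> = comult src tgt ?x (t,y) * ev t (path_vec (fst (t,y))) * g (path_vec (snd (t,y)))"
  proof (rule sum_single)
    show "finite (Spl ?x)" using Spl_finite xC .
    show "(t,y) \<in> Spl ?x" using assms(1) by (simp add: Spl_def comult_eq path_vec_def)
    fix z assume z: "z \<in> Spl ?x" "z \<noteq> (t,y)"
    obtain a b where ab: "z = (a,b)" by (cases z)
    have "fst z \<in> B" using Spl_B[OF xC z(1)] by simp
    show "comult src tgt ?x z * ev t (path_vec (fst z)) * g (path_vec (snd z)) = 0"
    proof (cases "a = t")
      case True
      then have "b \<noteq> y" using z ab by auto
      then have "\<not> (cat_ok src tgt t b \<and> path_cat t b = path_cat t y)"
        using cat_right_unique assms(1) by blast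
      then show ?thesis using ab True by (simp add: comult_eq path_vec_def)
    next
      case False
      then show ?thesis using ev_delta \<open>fst z \<in> B\<close> ab by simp
    qed
  qed
  also have "\<dots> = g (path_vec y)" using assms(1) tB ev_delta by (simp add: comult_eq path_vec_def)
  finally show ?thesis .
qed

lemma L_core:
  assumes fq: "left_fqcF src tgt C"
    and w0: "w0 < n" "e w0 = (w,[])" and Nw: "\<And>p. p \<in> N \<Longrightarrow> fst p = w"
  shows "\<exists>y0\<in>B. (\<forall>p\<in>N. \<exists>r. cat_ok src tgt p r \<and> path_cat p r = y0) \<and>
            \<not> (\<exists>t. snd t \<noteq> [] \<and> cat_ok src tgt t y0 \<and> path_cat t y0 \<in> B)"
proof -
  obtain I :: "nat set" where "embeds_in_free src tgt C (kn n) (\<lambda>m m' j. m j + m' j) (comod_act \<rho>) I"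
    using fq comodule unfolding left_fqcF_def by blast
  then obtain \<phi> where inj: "inj_on \<phi> (kn n)" and img: "\<phi> ` (kn n) \<subseteq> free_mod src tgt C I"
    and add: "\<forall>x\<in>kn n. \<forall>y\<in>kn n. \<phi> (\<lambda>j. x j + y j) = (\<lambda>i z. \<phi> x i z + \<phi> y i z)"
    and act: "\<forall>f\<in>dual C. \<forall>x\<in>kn n. \<phi> (comod_act \<rho> f x) = (\<lambda>i. conv src tgt C f (\<phi> x i))"
    unfolding embeds_in_free_def by blast
  have phi0: "\<phi> (\<lambda>_. 0) = (\<lambda>i z. 0)"
  proof -
    have "\<phi> (\<lambda>j. (\<lambda>_. 0::'k) j + (\<lambda>_. 0) j) = (\<lambda>i z. \<phi> (\<lambda>_. 0) i z + \<phi> (\<lambda>_. 0) i z)"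
      by (rule add[rule_format, OF zero_kn zero_kn])
    then have "\<phi> (\<lambda>_. 0) = (\<lambda>i z. \<phi> (\<lambda>_. 0) i z + \<phi> (\<lambda>_. 0) i z)" by simp
    then have "\<And>i z. \<phi> (\<lambda>_. 0) i z = \<phi> (\<lambda>_. 0) i z + \<phi> (\<lambda>_. 0) i z" by metis
    then show ?thesis by (intro ext) (metis add_cancel_left_right)
  qed
  have dualphi: "\<phi> m k \<in> dual C" if "m \<in> kn n" for m k
    using img that unfolding free_mod_def by blast
  have "unitvec w0 \<noteq> (\<lambda>_. 0::'k)" by (metis unitvec_def one_neq_zero)
  then have "\<phi> (unitvec w0) \<noteq> \<phi> (\<lambda>_. 0)" using inj unitvec_kn[OF w0(1)] zero_kn
    unfolding inj_on_def by blast
  then obtain k where k: "\<phi> (unitvec w0) k \<noteq> (\<lambda>_. 0)" using phi0 by (metis ext)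
  define G where "G = \<phi> (unitvec w0) k"
  have G: "G \<in> dual C" unfolding G_def using dualphi unitvec_kn w0 by blast
  obtain y0 where y0: "y0 \<in> B" "G (path_vec y0) \<noteq> 0"
    using dual_ext[OF G] k unfolding G_def by blast
  have pref_y0: "\<exists>r. cat_ok src tgt p r \<and> path_cat p r = y0" if p: "p \<in> N" for p
  proof -
    obtain i where i: "i < n" "e i = p" using N_e p by blast
    have pB: "p \<in> B" using p N_sub by auto
    have "comod_act \<rho> (ev p) (unitvec i) = unitvec w0"
    proof
      fix l
      have "(l < n \<and> ind l p i) \<longleftrightarrow> l = w0"
      proof
        assume "l < n \<and> ind l p i"
        then have "cat_ok src tgt (e l) p" "path_cat (e l) p = p" using i by (auto simp: indr_def)
        then have "e l = (fst p, [])" by (rule cat_Nil_left)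
        then have "e l = e w0" using w0 Nw p by simp
        then show "l = w0" using e_inj \<open>l < n \<and> ind l p i\<close> w0 by blast
      next
        assume "l = w0"
        moreover have "cat_ok src tgt (w,[]) p" using B_valid pB Nw p by (simp add: cat_ok_def)
        moreover have "path_cat (w,[]) p = p" using Nw[OF p] by (simp add: path_cat_def prod_eq_iff)
        ultimately show "l < n \<and> ind l p i" using w0 i by (simp add: indr_def)
      qed
      then show "comod_act \<rho> (ev p) (unitvec i) l = unitvec w0 l"
        unfolding act_ev_unit[OF i(1)] by (simp add: unitvec_def)
    qed
    then have "\<phi> (unitvec w0) = (\<lambda>k. conv src tgt C (ev p) (\<phi> (unitvec i) k))"
      using act ev_dual unitvec_kn[OF i(1)] by metis
    then have "conv src tgt C (ev p) (\<phi> (unitvec i) k) (path_vec y0) \<noteq> 0"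
      using y0(2) unfolding G_def by metis
    then obtain a b where "cat_ok src tgt a b" "path_cat a b = y0" "ev p (path_vec a) \<noteq> 0"
      using conv_single[OF y0(1) ev_dual dualphi[OF unitvec_kn[OF i(1)]]] by blast
    moreover have "a \<in> B" using B_split calculation y0(1) by metis
    ultimately show ?thesis using ev_delta by (metis one_neq_zero)
  qed
  have nomax: "\<not> (\<exists>t. snd t \<noteq> [] \<and> cat_ok src tgt t y0 \<and> path_cat t y0 \<in> B)"
  proof
    assume "\<exists>t. snd t \<noteq> [] \<and> cat_ok src tgt t y0 \<and> path_cat t y0 \<in> B"
    then obtain t where t: "snd t \<noteq> []" "cat_ok src tgt t y0" "path_cat t y0 \<in> B" by blast
    have "comod_act \<rho> (ev t) (unitvec w0) = (\<lambda>_. 0)"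
    proof
      fix l
      have "\<not> ind l t w0" using t(1) w0(2) unfolding indr_def path_cat_def by auto
      then show "comod_act \<rho> (ev t) (unitvec w0) l = 0" unfolding act_ev_unit[OF w0(1)] by simp
    qed
    then have "(\<lambda>i z. 0) = (\<lambda>k. conv src tgt C (ev t) (\<phi> (unitvec w0) k))"
      using act ev_dual unitvec_kn[OF w0(1)] phi0 by metis
    then have "conv src tgt C (ev t) G (path_vec (path_cat t y0)) = 0" unfolding G_def by metis
    then have "G (path_vec y0) = 0" using conv_at_cat[OF t(2,3) G] by simp
    then show False using y0 by simp
  qed
  show ?thesis using y0(1) pref_y0 nomax by blast
qed

end



context monoC begin

lemma finN_intro: assumes "N \<subseteq> B" "finite N" "\<And>a b. cat_ok src tgt a b \<Longrightarrow> path_cat a b \<in> N \<Longrightarrow> a \<in> N"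
  shows "\<exists>e. finN src tgt B C N e (card N)"
proof -
  obtain e where "bij_betw e {0..<card N} N" using ex_bij_betw_nat_finite assms(2) by blast
  then have "bij_betw e {..<card N} N" by (simp add: atLeast0LessThan)
  then show ?thesis using assms unfolding finN_def finN_axioms_def using monoC_axioms by blast
qed

lemma Lprime:
  assumes fq: "left_fqcF src tgt C" and P: "finite P" "P \<subseteq> B" "\<And>p. p \<in> P \<Longrightarrow> fst p = w"
  shows "\<exists>y0\<in>B. fst y0 = w \<and> (\<forall>p\<in>P. \<exists>r. cat_ok src tgt p r \<and> path_cat p r = y0) \<and>
            \<not> (\<exists>t. snd t \<noteq> [] \<and> cat_ok src tgt t y0 \<and> path_cat t y0 \<in> B)"
proof -
  define N where "N = insert (w,[]) (\<Union>p\<in>P. (\<lambda>k. (w, take k (snd p))) ` {..length (snd p)})"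
  have Nfin: "finite N" unfolding N_def using P(1) by auto
  have NB: "N \<subseteq> B"
  proof
    fix q assume "q \<in> N"
    then consider "q = (w,[])" | p k where "p \<in> P" "q = (w, take k (snd p))" unfolding N_def by blast
    then show "q \<in> B"
    proof cases
      case 1 then show ?thesis using B_vert by simp
    next
      case 2
      have "valid_path src tgt p" using B_valid P(2) 2(1) by blast
      from cat_split[OF this, of k] have "(fst p, take k (snd p)) \<in> B"
        using B_split(1) P(2) 2(1) by (metis subsetD)
      then show ?thesis using 2 P(3) by simp
    qed
  qed
  have Nw: "fst q = w" if "q \<in> N" for q using that unfolding N_def by auto
  have Npref: "a \<in> N" if ab: "cat_ok src tgt a b" "path_cat a b \<in> N" for a b
  proof -
    have fa: "fst a = w" using Nw[OF ab(2)] by simp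
    from ab(2) consider "path_cat a b = (w,[])" | p k where "p \<in> P" "path_cat a b = (w, take k (snd p))"
      "k \<le> length (snd p)" unfolding N_def by blast
    then show ?thesis
    proof cases
      case 1 then have "snd a = []" by (simp add: path_cat_def)
      then show ?thesis using fa unfolding N_def by (simp add: prod_eq_iff)
    next
      case 2
      have e: "snd a @ snd b = take k (snd p)" using 2(2) by (metis cat_snd snd_conv)
      then have "snd a = take (length (snd a)) (take k (snd p))" by (metis append_eq_conv_conj)
      moreover have "length (snd a) \<le> k"
      proof -
        have "length (snd a @ snd b) = min k (length (snd p))" using e by simp
        then show ?thesis by simp
      qed
      ultimately have "snd a = take (length (snd a)) (snd p)" by (simp add: min_absorb1)
      moreover have "length (snd a) \<le> length (snd p)" using \<open>length (snd a) \<le> k\<close> 2(3) by simp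
      ultimately have "a \<in> (\<lambda>k. (w, take k (snd p))) ` {..length (snd p)}" using fa
        by (intro image_eqI[where x="length (snd a)"]) (simp_all add: prod_eq_iff)
      then show ?thesis using 2(1) unfolding N_def by blast
    qed
  qed
  have "\<exists>e. finN src tgt B C N e (card N)" by (rule finN_intro[OF NB Nfin]) (rule Npref)
  then obtain e where fN: "finN src tgt B C N e (card N)" by blast
  interpret F: finN src tgt B C N e "card N" by (rule fN)
  have "(w,[]) \<in> N" unfolding N_def by simp
  then obtain w0 where w0: "w0 < card N" "e w0 = (w,[])" using F.N_e by blast
  from F.L_core[OF fq w0 Nw] obtain y0 where y0: "y0 \<in> B" "\<forall>p\<in>N. \<exists>r. cat_ok src tgt p r \<and> path_cat p r = y0"
    "\<not> (\<exists>t. snd t \<noteq> [] \<and> cat_ok src tgt t y0 \<and> path_cat t y0 \<in> B)" by blast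
  have "fst y0 = w" using y0(2) \<open>(w,[]) \<in> N\<close> by (metis cat_fst fst_conv)
  moreover have "P \<subseteq> N"
  proof
    fix p assume "p \<in> P"
    then have "p = (w, take (length (snd p)) (snd p))" using P(3) by (simp add: prod_eq_iff)
    then show "p \<in> N" unfolding N_def using \<open>p \<in> P\<close> by blast
  qed
  ultimately show ?thesis using y0 by blast
qed

lemma chain:
  assumes fq: "left_fqcF src tgt C" and pq: "p \<in> B" "q \<in> B" "fst p = fst q"
    and len: "length (snd p) \<le> length (snd q)"
  shows "snd p = take (length (snd p)) (snd q)"
proof -
  have "finite {p,q}" "{p,q} \<subseteq> B" using pq by auto
  moreover have "\<And>x. x \<in> {p,q} \<Longrightarrow> fst x = fst p" using pq by auto
  ultimately obtain y0 where y0: "\<forall>x\<in>{p,q}. \<exists>r. cat_ok src tgt x r \<and> path_cat x r = y0"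
    using Lprime[OF fq, of "{p,q}" "fst p"] by blast
  then obtain r1 r2 where r: "path_cat p r1 = y0" "path_cat q r2 = y0" by blast
  have "snd p @ snd r1 = snd y0" using r(1) by (metis cat_snd)
  moreover have "snd q @ snd r2 = snd y0" using r(2) by (metis cat_snd)
  ultimately have t: "take (length (snd p)) (snd y0) = snd p" "take (length (snd q)) (snd y0) = snd q"
    by (metis append_eq_conv_conj)+
  have "take (length (snd p)) (snd q) = take (length (snd p)) (take (length (snd q)) (snd y0))" using t by simp
  also have "\<dots> = take (length (snd p)) (snd y0)" using len by (simp add: min_absorb1)
  finally show ?thesis using t by simp
qed

lemma D_finite: assumes fq: "left_fqcF src tgt C" shows "finite {p \<in> B. fst p = w}"
proof (rule ccontr)
  let ?D = "{p \<in> B. fst p = w}"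
  assume inf: "\<not> finite ?D"
  have long: "\<exists>p\<in>?D. L < length (snd p)" for L
  proof (rule ccontr)
    assume "\<not> (\<exists>p\<in>?D. L < length (snd p))"
    then have "(\<lambda>p. length (snd p)) ` ?D \<subseteq> {..L}" by auto
    moreover have "inj_on (\<lambda>p. length (snd p)) ?D"
    proof (rule inj_onI)
      fix p q assume "p \<in> ?D" "q \<in> ?D" "length (snd p) = length (snd q)"
      then have "snd p = snd q" using chain[OF fq, of p q] by auto
      then show "p = q" using \<open>p \<in> ?D\<close> \<open>q \<in> ?D\<close> by (simp add: prod_eq_iff)
    qed
    ultimately have "finite ?D" by (meson finite_atMost inj_on_finite)
    then show False using inf by simp
  qed
  obtain p1 where p1: "p1 \<in> ?D" "0 < length (snd p1)" using long by blast
  define a0 where "a0 = hd (snd p1)"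
  define u1 where "u1 = tgt a0"
  obtain y0 where y0: "y0 \<in> B" "fst y0 = u1"
    "\<not> (\<exists>t. snd t \<noteq> [] \<and> cat_ok src tgt t y0 \<and> path_cat t y0 \<in> B)"
    using Lprime[OF fq, of "{}" u1] by auto
  obtain p where p: "p \<in> ?D" "max (length (snd p1)) (length (snd y0) + 1) < length (snd p)" using long by blast
  have "snd p1 = take (length (snd p1)) (snd p)" using chain[OF fq, of p1 p] p p1 by auto
  then have hdp: "hd (snd p) = a0" unfolding a0_def using p1(2) p(2)
    by (metis hd_take)
  obtain rest where rest: "snd p = a0 # rest" using hdp p(2) by (cases "snd p") auto
  have vp: "valid_path src tgt p" using B_valid p(1) by auto
  have "p = (w, a0 # rest)" using rest p(1) by (simp add: prod_eq_iff)
  then have va: "src a0 = w" "valid_path src tgt (u1, rest)"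
    using vp unfolding u1_def by simp_all
  have "cat_ok src tgt (w,[a0]) (u1, rest)" using va unfolding cat_ok_def u1_def by simp
  moreover have "path_cat (w,[a0]) (u1, rest) = p" using rest p(1) by (simp add: path_cat_def prod_eq_iff)
  ultimately have p'B: "(u1, rest) \<in> B" using B_split(2)[of "(w,[a0])" "(u1,rest)"] p(1) by simp
  have "length (snd y0) \<le> length (snd (u1,rest))" using p(2) rest by simp
  then have yr: "snd y0 = take (length (snd y0)) rest" using chain[OF fq y0(1) p'B] y0(2) by simp
  have "cat_ok src tgt (w,[a0]) y0" using va y0 B_valid unfolding cat_ok_def u1_def by simp
  moreover have "path_cat (w,[a0]) y0 \<in> B"
  proof -
    have "path_cat (w,[a0]) y0 = (fst p, take (Suc (length (snd y0))) (snd p))"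
      using rest yr p(1) by (simp add: path_cat_def)
    moreover from cat_split[OF vp, of "Suc (length (snd y0))"]
    have "(fst p, take (Suc (length (snd y0))) (snd p)) \<in> B" using B_split(1) p(1) by (metis (no_types, lifting) mem_Collect_eq)
    ultimately show ?thesis by simp
  qed
  ultimately show False using y0(3) by (metis list.distinct(1) snd_conv)
qed

end



context finN begin

lemma coords_lact:
  assumes NV: "N = {p\<in>B. fst p = v}" and x: "x \<in> C" and f: "f \<in> dual C"
  shows "(\<lambda>l. if l < n then lact src tgt C f x (e l) else 0) = comod_act \<rho> f (\<lambda>l. if l < n then x (e l) else 0)"
proof
  fix l
  define m where "m = (\<lambda>l. if l < n then x (e l) else 0)"
  show "(if l < n then lact src tgt C f x (e l) else 0) = comod_act \<rho> f m l"
  proof (cases "l < n")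
    case False
    then have "(\<lambda>p. \<rho> m (l,p)) = (\<lambda>_. 0)" by (simp add: rho_def)
    then show ?thesis using False dual_zero[OF f] by (simp add: comod_act_def)
  next
    case l: True
    define T where "T = {b. \<exists>j<n. ind l b j}"
    have Tfin: "finite T"
    proof -
      have "T \<subseteq> (\<Union>j<n. snd ` {(a,b). cat_ok src tgt a b \<and> path_cat a b = e j})"
      proof
        fix b assume "b \<in> T"
        then obtain j where j: "j < n" "ind l b j" unfolding T_def by blast
        then have "(e l, b) \<in> {(a,b). cat_ok src tgt a b \<and> path_cat a b = e j}" unfolding indr_def by simp
        then have "snd (e l, b) \<in> snd ` {(a,b). cat_ok src tgt a b \<and> path_cat a b = e j}" by (rule imageI)
        then show "b \<in> (\<Union>j<n. snd ` {(a,b). cat_ok src tgt a b \<and> path_cat a b = e j})" using j(1) by auto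
      qed
      moreover have "finite (\<Union>j<n. snd ` {(a,b). cat_ok src tgt a b \<and> path_cat a b = e j})"
        by (intro finite_UN_I finite_imageI split_finite) simp
      ultimately show ?thesis by (rule finite_subset)
    qed
    have Tval: "\<rho> m (l,b) = x (path_cat (e l) b) \<and> cat_ok src tgt (e l) b" if "b \<in> T" for b
    proof -
      obtain j where j: "j < n" "ind l b j" using \<open>b \<in> T\<close> unfolding T_def by blast
      have "\<rho> m (l,b) = m j" by (rule rho_val1[OF l j])
      then show ?thesis using j unfolding m_def indr_def by simp
    qed
    have rhs: "comod_act \<rho> f m l = (\<Sum>b\<in>T. x (path_cat (e l) b) * f (path_vec b))"
    proof -
      have "comod_act \<rho> f m l = f (\<lambda>p. \<rho> m (l,p))" by (simp add: comod_act_def)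
      also have "\<dots> = (\<Sum>b\<in>T. \<rho> m (l,b) * f (path_vec b))"
      proof (rule expand[OF f rho_C Tfin])
        show "{p. \<rho> m (l,p) \<noteq> 0} \<subseteq> T" unfolding T_def using rho_val0 by blast
      qed
      also have "\<dots> = (\<Sum>b\<in>T. x (path_cat (e l) b) * f (path_vec b))"
        using Tval by (intro sum.cong refl) simp
      finally show ?thesis .
    qed
    define g where "g z = comult src tgt x z * ev (e l) (path_vec (fst z)) * f (path_vec (snd z))" for z
    have elB: "e l \<in> B" using e_B l by simp
    have "lact src tgt C f x (e l) = (\<Sum>z\<in>Spl x. g z)" unfolding lact_eq[OF x f] g_def by simp
    also have "\<dots> = (\<Sum>z\<in>Spl x \<union> Pair (e l) ` T. g z)"
    proof (rule sum.mono_neutral_left)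
      show "finite (Spl x \<union> Pair (e l) ` T)" using Spl_finite[OF x] Tfin by simp
      show "\<forall>z\<in>Spl x \<union> Pair (e l) ` T - Spl x. g z = 0" unfolding g_def Spl_def by simp
    qed simp
    also have "\<dots> = (\<Sum>z\<in>Pair (e l) ` T. g z)"
    proof (rule sum.mono_neutral_right)
      show "finite (Spl x \<union> Pair (e l) ` T)" using Spl_finite[OF x] Tfin by simp
      show "\<forall>z\<in>Spl x \<union> Pair (e l) ` T - Pair (e l) ` T. g z = 0"
      proof
        fix z assume z: "z \<in> Spl x \<union> Pair (e l) ` T - Pair (e l) ` T"
        then have zS: "z \<in> Spl x" by blast
        have fzB: "fst z \<in> B" using Spl_B[OF x zS] by simp
        show "g z = 0"
        proof (cases "fst z = e l")
          case False then show ?thesis unfolding g_def using ev_delta[OF fzB] by simp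
        next
          case True
          have c: "cat_ok src tgt (e l) (snd z)" using Spl_B(3)[OF x zS] True by simp
          have "x (path_cat (e l) (snd z)) \<noteq> 0" using zS True c unfolding Spl_def
            by (cases z) (simp add: comult_eq)
          then have "path_cat (e l) (snd z) \<in> B" using x unfolding memC by blast
          moreover have "fst (e l) = v" using e_N[OF l] NV by simp
          ultimately have "path_cat (e l) (snd z) \<in> N" using NV by simp
          then obtain j where j: "j < n" "e j = path_cat (e l) (snd z)" using N_e by blast
          have "ind l (snd z) j" unfolding indr_def using c j(2) by simp
          then have "snd z \<in> T" unfolding T_def using j(1) by blast
          then have "z \<in> Pair (e l) ` T" using True by (metis prod.collapse image_eqI)
          then show ?thesis using z by blast
        qed
      qed
    qed simp
    also have "\<dots> = (\<Sum>b\<in>T. g (e l, b))" by (rule sum.reindex_cong[where l="Pair (e l)"]) (auto simp: inj_on_def)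
    also have "\<dots> = (\<Sum>b\<in>T. x (path_cat (e l) b) * f (path_vec b))"
    proof (rule sum.cong[OF refl])
      fix b assume "b \<in> T"
      then show "g (e l, b) = x (path_cat (e l) b) * f (path_vec b)"
        using Tval ev_delta[OF elB] unfolding g_def by (simp add: comult_eq)
    qed
    finally show ?thesis using l rhs unfolding m_def by simp
  qed
qed

end



context monoC begin

lemma zero_dual: "(\<lambda>_. 0) \<in> dual C" by (simp add: dual_def)

lemma conv_zero: assumes "f \<in> dual C" shows "conv src tgt C f (\<lambda>_. 0) = (\<lambda>_. 0)"
proof
  fix x show "conv src tgt C f (\<lambda>_. 0) x = 0"
  proof (cases "x \<in> C")
    case True then show ?thesis using conv_eq[OF True assms zero_dual] by simp
  next
    case False then show ?thesis by (simp add: conv_def)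
  qed
qed

definition DD where "DD v = {p\<in>B. fst p = v}"

lemma DD_pref: "cat_ok src tgt a b \<Longrightarrow> path_cat a b \<in> DD v \<Longrightarrow> a \<in> DD v"
  unfolding DD_def using B_split by auto

lemma DD_finN: assumes "left_fqcF src tgt C" shows "\<exists>e. finN src tgt B C (DD v) e (card (DD v))"
  by (rule finN_intro) (use D_finite[OF assms] DD_pref in \<open>auto simp: DD_def\<close>)

theorem qcF: assumes fq: "left_fqcF src tgt C" shows "left_qcF src tgt C"
proof -
  define ee where "ee v = (SOME e. finN src tgt B C (DD v) e (card (DD v)))" for v
  define nn where "nn v = card (DD v)" for v
  have fN: "finN src tgt B C (DD v) (ee v) (nn v)" for v
    unfolding ee_def nn_def using DD_finN[OF fq] by (rule someI_ex)
  define good where "good v \<phi> \<longleftrightarrow> inj_on \<phi> (kn (nn v)) \<and> (\<forall>m\<in>kn (nn v). \<forall>k. \<phi> m k \<in> dual C) \<and>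
      (\<forall>m\<in>kn (nn v). finite {k. \<phi> m k \<noteq> (\<lambda>_. 0)}) \<and>
      (\<forall>x\<in>kn (nn v). \<forall>y\<in>kn (nn v). \<phi> (\<lambda>j. x j + y j) = (\<lambda>i z. \<phi> x i z + \<phi> y i z)) \<and>
      (\<forall>f\<in>dual C. \<forall>x\<in>kn (nn v). \<phi> (comod_act (rho src tgt (ee v) (nn v)) f x) = (\<lambda>i. conv src tgt C f (\<phi> x i)))"
    for v and \<phi> :: "(nat \<Rightarrow> 'k) \<Rightarrow> nat \<Rightarrow> (('v,'e) path \<Rightarrow> 'k) \<Rightarrow> 'k"
  have exgood: "\<exists>\<phi>. good v \<phi>" for v
  proof -
    interpret F: finN src tgt B C "DD v" "ee v" "nn v" by (rule fN)
    obtain I :: "nat set" where "embeds_in_free src tgt C (kn (nn v)) (\<lambda>m m' j. m j + m' j) (comod_act F.\<rho>) I"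
      using fq F.comodule unfolding left_fqcF_def by blast
    then obtain \<phi> where inj: "inj_on \<phi> (kn (nn v))" and img: "\<phi> ` (kn (nn v)) \<subseteq> free_mod src tgt C I"
      and add: "\<forall>x\<in>kn (nn v). \<forall>y\<in>kn (nn v). \<phi> (\<lambda>j. x j + y j) = (\<lambda>i z. \<phi> x i z + \<phi> y i z)"
      and act: "\<forall>f\<in>dual C. \<forall>x\<in>kn (nn v). \<phi> (comod_act F.\<rho> f x) = (\<lambda>i. conv src tgt C f (\<phi> x i))"
      unfolding embeds_in_free_def by blast
    have "\<forall>m\<in>kn (nn v). \<forall>k. \<phi> m k \<in> dual C"
      using img unfolding free_mod_def by blast
    moreover have "\<forall>m\<in>kn (nn v). finite {k. \<phi> m k \<noteq> (\<lambda>_. 0)}"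
      using img unfolding free_mod_def by blast
    ultimately have "good v \<phi>" unfolding good_def using inj add act by blast
    then show ?thesis by blast
  qed
  define PHI where "PHI v = (SOME \<phi>. good v \<phi>)" for v
  have G: "good v (PHI v)" for v unfolding PHI_def using exgood by (rule someI_ex)
  have Ginj: "inj_on (PHI v) (kn (nn v))" and Gdual: "\<And>m k. m \<in> kn (nn v) \<Longrightarrow> PHI v m k \<in> dual C"
    and Gfin: "\<And>m. m \<in> kn (nn v) \<Longrightarrow> finite {k. PHI v m k \<noteq> (\<lambda>_. 0)}"
    and Gadd: "\<And>x y. x \<in> kn (nn v) \<Longrightarrow> y \<in> kn (nn v) \<Longrightarrow> PHI v (\<lambda>j. x j + y j) = (\<lambda>i z. PHI v x i z + PHI v y i z)"
    and Gact: "\<And>f x. f \<in> dual C \<Longrightarrow> x \<in> kn (nn v) \<Longrightarrow> PHI v (comod_act (rho src tgt (ee v) (nn v)) f x) = (\<lambda>i. conv src tgt C f (PHI v x i))"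
    for v using G[of v] unfolding good_def by auto
  have PHI0: "PHI v (\<lambda>_. 0) = (\<lambda>i z. 0)" for v
  proof -
    have "PHI v (\<lambda>j. (\<lambda>_. 0::'k) j + (\<lambda>_. 0) j) = (\<lambda>i z. PHI v (\<lambda>_. 0) i z + PHI v (\<lambda>_. 0) i z)"
      by (rule Gadd) (simp_all add: kn_def)
    then have "PHI v (\<lambda>_. 0) = (\<lambda>i z. PHI v (\<lambda>_. 0) i z + PHI v (\<lambda>_. 0) i z)" by simp
    then have "\<And>i z. PHI v (\<lambda>_. 0) i z = PHI v (\<lambda>_. 0) i z + PHI v (\<lambda>_. 0) i z" by metis
    then show ?thesis by (intro ext) (metis add_cancel_left_right)
  qed
  define coords where "coords v x = (\<lambda>l. if l < nn v then x (ee v l) else (0::'k))" for v and x :: "('v,'e) path \<Rightarrow> 'k"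
  have ckn: "coords v x \<in> kn (nn v)" for v x by (simp add: coords_def kn_def)
  have ee_fst: "l < nn v \<Longrightarrow> fst (ee v l) = v" for v l
    using finN.e_N[OF fN] unfolding DD_def by blast
  have ee_surj: "p \<in> B \<Longrightarrow> \<exists>l < nn (fst p). ee (fst p) l = p" for p
    using finN.N_e[OF fN, of p "fst p"] unfolding DD_def by blast
  define \<Phi> where "\<Phi> x = (\<lambda>(q :: ('v,'e) path,k :: nat). if snd q = [] then PHI (fst q) (coords (fst q) x) k else (\<lambda>_. 0))"
    for x :: "('v,'e) path \<Rightarrow> 'k"
  have "embeds_in_free src tgt C C (\<lambda>x y p. x p + y p) (lact src tgt C) (UNIV :: (('v,'e) path \<times> nat) set)"
    unfolding embeds_in_free_def
  proof (rule exI[where x=\<Phi>], intro conjI ballI)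
    show "inj_on \<Phi> C"
    proof (rule inj_onI)
      fix x y assume x: "x \<in> C" and y: "y \<in> C" and eq: "\<Phi> x = \<Phi> y"
      show "x = y"
      proof (rule ccontr)
        assume "x \<noteq> y"
        then obtain p where p: "x p \<noteq> y p" by blast
        then have "x p \<noteq> 0 \<or> y p \<noteq> 0" by auto
        then have "p \<in> B" using x y unfolding memC by blast
        then obtain l where l: "l < nn (fst p)" "ee (fst p) l = p" using ee_surj by blast
        let ?v = "fst p"
        have "coords ?v x l \<noteq> coords ?v y l" using l p unfolding coords_def by simp
        then have "coords ?v x \<noteq> coords ?v y" by auto
        then have "PHI ?v (coords ?v x) \<noteq> PHI ?v (coords ?v y)" using inj_onD[OF Ginj _ ckn ckn] by blast
        then obtain k where "PHI ?v (coords ?v x) k \<noteq> PHI ?v (coords ?v y) k" by blast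
        moreover have "\<Phi> x ((?v,[]),k) = \<Phi> y ((?v,[]),k)" using eq by simp
        ultimately show False unfolding \<Phi>_def by simp
      qed
    qed
  next
    show "\<Phi> ` C \<subseteq> free_mod src tgt C UNIV"
    proof
      fix F assume "F \<in> \<Phi> ` C"
      then obtain x where x: "x \<in> C" "F = \<Phi> x" by blast
      have d: "F i \<in> dual C" for i
        using x(2) Gdual ckn zero_dual unfolding \<Phi>_def by (cases i) auto
      define V where "V = fst ` {p. x p \<noteq> 0}"
      have Vfin: "finite V" using x(1) unfolding memC V_def by blast
      have c0: "coords v x = (\<lambda>_. 0)" if "v \<notin> V" for v
      proof
        fix l show "coords v x l = 0"
        proof (cases "l < nn v")
          case True
          then have "fst (ee v l) = v" using ee_fst by blast
          show ?thesis
          proof (rule ccontr)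
            assume "coords v x l \<noteq> 0"
            then have "x (ee v l) \<noteq> 0" using True unfolding coords_def by simp
            then have "fst (ee v l) \<in> V" unfolding V_def by blast
            then show False using that \<open>fst (ee v l) = v\<close> by simp
          qed
        qed (simp add: coords_def)
      qed
      have "{i. F i \<noteq> (\<lambda>_. 0)} \<subseteq> (\<Union>v\<in>V. (\<lambda>k. ((v,[]),k)) ` {k. PHI v (coords v x) k \<noteq> (\<lambda>_. 0)})"
      proof
        fix i assume i: "i \<in> {i. F i \<noteq> (\<lambda>_. 0)}"
        obtain q k where qk: "i = (q,k)" by (cases i)
        have sq: "snd q = []" using i qk x(2) unfolding \<Phi>_def by (auto split: if_splits)
        then have nz: "PHI (fst q) (coords (fst q) x) k \<noteq> (\<lambda>_. 0)" using i qk x(2) unfolding \<Phi>_def by auto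
        have "fst q \<in> V"
        proof (rule ccontr)
          assume "fst q \<notin> V"
          then have "PHI (fst q) (coords (fst q) x) k = (\<lambda>_. 0)" using c0 PHI0 by simp
          then show False using nz by simp
        qed
        moreover have "i = ((fst q, []), k)" using qk sq by (simp add: prod_eq_iff)
        ultimately show "i \<in> (\<Union>v\<in>V. (\<lambda>k. ((v,[]),k)) ` {k. PHI v (coords v x) k \<noteq> (\<lambda>_. 0)})"
          using nz by blast
      qed
      moreover have "finite (\<Union>v\<in>V. (\<lambda>k. ((v,[]),k)) ` {k. PHI v (coords v x) k \<noteq> (\<lambda>_. 0)})"
        using Vfin Gfin[OF ckn] by (intro finite_UN_I finite_imageI) auto
      ultimately have "finite {i. F i \<noteq> (\<lambda>_. 0)}" by (rule finite_subset)
      then show "F \<in> free_mod src tgt C UNIV" unfolding free_mod_def using d by blast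
    qed
  next
    fix x y assume x: "x \<in> C" and y: "y \<in> C"
    show "\<Phi> (\<lambda>p. x p + y p) = (\<lambda>i z. \<Phi> x i z + \<Phi> y i z)"
    proof
      fix i :: "('v,'e) path \<times> nat" obtain q k where qk: "i = (q,k)" by (cases i)
      have "coords v (\<lambda>p. x p + y p) = (\<lambda>j. coords v x j + coords v y j)" for v
        unfolding coords_def by auto
      then show "\<Phi> (\<lambda>p. x p + y p) i = (\<lambda>z. \<Phi> x i z + \<Phi> y i z)"
        unfolding qk \<Phi>_def using Gadd[OF ckn ckn] by simp
    qed
  next
    fix f x assume f: "f \<in> dual C" and x: "x \<in> C"
    show "\<Phi> (lact src tgt C f x) = (\<lambda>i. conv src tgt C f (\<Phi> x i))"
    proof
      fix i :: "('v,'e) path \<times> nat" obtain q k where qk: "i = (q,k)" by (cases i)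
      show "\<Phi> (lact src tgt C f x) i = conv src tgt C f (\<Phi> x i)"
      proof (cases "snd q = []")
        case False then show ?thesis unfolding qk \<Phi>_def using conv_zero[OF f] by simp
      next
        case True
        let ?v = "fst q"
        interpret F: finN src tgt B C "DD ?v" "ee ?v" "nn ?v" by (rule fN)
        have "coords ?v (lact src tgt C f x) = comod_act (rho src tgt (ee ?v) (nn ?v)) f (coords ?v x)"
          unfolding coords_def by (rule F.coords_lact[OF _ x f]) (simp add: DD_def)
        then show ?thesis unfolding qk \<Phi>_def using True Gact[OF f ckn] by simp
      qed
    qed
  qed
  then show ?thesis unfolding left_qcF_def by blast
qed

end


theorem theorem4p8:
  fixes src tgt :: "'e \<Rightarrow> 'v" and C :: "(('v,'e) path \<Rightarrow> 'k::field) set"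
  assumes "monomial_subcoalgebra src tgt C"
    and "left_fqcF src tgt C"
  shows "left_qcF src tgt C"
proof -
  from assms(1) obtain B where B: "B \<subseteq> {p. valid_path src tgt p}"
    "C = {x \<in> path_coalg src tgt. \<forall>p. x p \<noteq> 0 \<longrightarrow> p \<in> B}"
    and sc: "subcoalgebra src tgt C" and v: "\<And>v. path_vec (v, []) \<in> C"
    unfolding monomial_subcoalgebra_def by blast
  interpret M: monoC src tgt B C
    using B sc v by unfold_locales auto
  show ?thesis by (rule M.qcF[OF assms(2)])
qed

end
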